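(* Let $n\ge3$, $e\ge2$, $1\le k\le e-1$. The assignment $q_1\mapsto\tilde t_i\tilde t_{i-k}$ (an element independent of $i\in\mathbb{Z}/e\mathbb{Z}$) and $q_m\mapsto\tilde s_{m+1}$ for $2\le m\le n-1$ defines an injective group homomorphism from the Artin–Tits group $B(2,1,n-1)$ into $B^{(k)}(e,e,n)$.
   Context: $B(2,1,n-1)$ is the Artin–Tits group of type $B_{n-1}$ with generators $q_1,\dots,q_{n-1}$ and relations $q_1q_2q_1q_2=q_2q_1q_2q_1$, $q_mq_{m+1}q_m=q_{m+1}q_mq_{m+1}$ for $2\le m\le n-2$, and $q_aq_b=q_bq_a$ for $|a-b|>1$. $B^{(k)}(e,e,n)$ is the group with generators $\tilde t_0,\dots,\tilde t_{e-1},\tilde s_3,\dots,\tilde s_n$ and relations: $\tilde s_i\tilde s_j\tilde s_i=\tilde s_j\tilde s_i\tilde s_j$ for $|i-j|=1$; $\tilde s_i\tilde s_j=\tilde s_j\tilde s_i$ for $|i-j|>1$; $\tilde s_3\tilde t_i\tilde s_3=\tilde t_i\tilde s_3\tilde t_i$ for $i\in\mathbb{Z}/e\mathbb{Z}$; $\tilde s_j\tilde t_i=\tilde t_i\tilde s_j$ for $i\in\mathbb{Z}/e\mathbb{Z}$, $4\le j\le n$; $\tilde t_i\tilde t_{i-k}=\tilde t_j\tilde t_{j-k}$ for $i,j\in\mathbb{Z}/e\mathbb{Z}$ (it is the group of fractions of the Garside monoid with the same presentation). *)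

theory Defs
  imports Main
begin

text \<open>Group presentations: words over letters (generator, inverted?) and the
  congruence generated by free cancellation and a set of defining relations.\<close>

type_synonym 'a word = "('a \<times> bool) list"

definition letter_inv :: "'a \<times> bool \<Rightarrow> 'a \<times> bool" where
  "letter_inv x = (fst x, \<not> snd x)"

definition word_inv :: "'a word \<Rightarrow> 'a word" where
  "word_inv w = rev (map letter_inv w)"

definition gen :: "'a \<Rightarrow> 'a word" where
  "gen a = [(a, False)]"

inductive peq :: "('a word \<times> 'a word) set \<Rightarrow> 'a word \<Rightarrow> 'a word \<Rightarrow> bool"
  for R where
  peq_refl: "peq R w w"
| peq_sym: "peq R u v \<Longrightarrow> peq R v u"
| peq_trans: "peq R u v \<Longrightarrow> peq R v w \<Longrightarrow> peq R u w"
| peq_cancel: "peq R (u @ [x, letter_inv x] @ v) (u @ v)"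
| peq_rel: "(r, s) \<in> R \<Longrightarrow> peq R (u @ r @ v) (u @ s @ v)"

definition wsubst :: "('a \<Rightarrow> 'b word) \<Rightarrow> 'a word \<Rightarrow> 'b word" where
  "wsubst f w = concat (map (\<lambda>x. if snd x then word_inv (f (fst x)) else f (fst x)) w)"

definition words_over :: "'a set \<Rightarrow> 'a word \<Rightarrow> bool" where
  "words_over A w \<longleftrightarrow> (\<forall>x \<in> set w. fst x \<in> A)"

text \<open>Artin--Tits group B(2,1,n-1): generators q_1..q_{n-1} (as naturals).\<close>
definition relsB :: "nat \<Rightarrow> (nat word \<times> nat word) set" where
  "relsB n =
     {(gen 1 @ gen 2 @ gen 1 @ gen 2, gen 2 @ gen 1 @ gen 2 @ gen 1)}
   \<union> {(gen m @ gen (m+1) @ gen m, gen (m+1) @ gen m @ gen (m+1)) | m. 2 \<le> m \<and> m \<le> n - 2}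
   \<union> {(gen a @ gen b, gen b @ gen a) | a b. 1 \<le> a \<and> a \<le> n - 1 \<and> 1 \<le> b \<and> b \<le> n - 1
        \<and> (a > b + 1 \<or> b > a + 1)}"

definition gensB :: "nat \<Rightarrow> nat set" where
  "gensB n = {1..n-1}"

text \<open>B^(k)(e,e,n): generators T i (i in Z/eZ, represented by 0..e-1), S j (3 <= j <= n).\<close>
datatype genE = T nat | S nat

definition gensE :: "nat \<Rightarrow> nat \<Rightarrow> genE set" where
  "gensE e n = {T i | i. i < e} \<union> {S j | j. 3 \<le> j \<and> j \<le> n}"

definition tt :: "nat \<Rightarrow> nat \<Rightarrow> nat \<Rightarrow> genE word" where
  "tt e k i = gen (T i) @ gen (T ((i + e - k) mod e))"

definition relsE :: "nat \<Rightarrow> nat \<Rightarrow> nat \<Rightarrow> (genE word \<times> genE word) set" where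
  "relsE e k n =
     {(gen (S i) @ gen (S j) @ gen (S i), gen (S j) @ gen (S i) @ gen (S j)) | i j.
        3 \<le> i \<and> i \<le> n \<and> 3 \<le> j \<and> j \<le> n \<and> (i = j + 1 \<or> j = i + 1)}
   \<union> {(gen (S i) @ gen (S j), gen (S j) @ gen (S i)) | i j.
        3 \<le> i \<and> i \<le> n \<and> 3 \<le> j \<and> j \<le> n \<and> (i > j + 1 \<or> j > i + 1)}
   \<union> {(gen (S 3) @ gen (T i) @ gen (S 3), gen (T i) @ gen (S 3) @ gen (T i)) | i. i < e}
   \<union> {(gen (S j) @ gen (T i), gen (T i) @ gen (S j)) | i j. i < e \<and> 4 \<le> j \<and> j \<le> n}
   \<union> {(tt e k i, tt e k j) | i j. i < e \<and> j < e}"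

definition phi :: "nat \<Rightarrow> nat \<Rightarrow> nat \<Rightarrow> genE word" where
  "phi e k m = (if m = 1 then tt e k 0 else gen (S (m + 1)))"

end

theory Submission
  imports Defs
begin

declare peq_trans[trans]

lemma peq_ctx: "peq R u v \<Longrightarrow> peq R (a @ u @ b) (a @ v @ b)"
proof (induction rule: peq.induct)
  case (peq_refl w) show ?case by (rule peq.peq_refl)
next
  case (peq_sym u v) then show ?case by (metis peq.peq_sym)
next
  case (peq_trans u v w) then show ?case by (metis peq.peq_trans)
next
  case (peq_cancel u x v) show ?case using peq.peq_cancel[of R "a@u" x "v@b"] by simp
next
  case (peq_rel r s u v) show ?case using peq.peq_rel[OF peq_rel, of "a@u" "v@b"] by simp
qed

lemma peq_ctx': "peq R u v \<Longrightarrow> x = a @ u @ b \<Longrightarrow> y = a @ v @ b \<Longrightarrow> peq R x y"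
  using peq_ctx by blast

lemma peq_app: "peq R u u' \<Longrightarrow> peq R v v' \<Longrightarrow> peq R (u@v) (u'@v')"
proof -
  assume a: "peq R u u'" and b: "peq R v v'"
  have "peq R (u@v) (u'@v)" using peq_ctx[OF a, of "[]" v] by simp
  also have "peq R (u'@v) (u'@v')" using peq_ctx[OF b, of u' "[]"] by simp
  finally show ?thesis .
qed

lemma wi_Nil[simp]: "word_inv [] = []" by (simp add: word_inv_def)
lemma wi_Cons[simp]: "word_inv (x # w) = word_inv w @ [letter_inv x]" by (simp add: word_inv_def)
lemma wi_app[simp]: "word_inv (u @ v) = word_inv v @ word_inv u" by (simp add: word_inv_def)
lemma li_li[simp]: "letter_inv (letter_inv x) = x" by (simp add: letter_inv_def)
lemma li_pair[simp]: "letter_inv (a, b) = (a, \<not> b)" by (simp add: letter_inv_def)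
lemma wi_wi[simp]: "word_inv (word_inv w) = w" by (induction w) auto

lemma cancel_word: "peq R (w @ word_inv w) []"
proof (induction w)
  case Nil then show ?case by (simp add: peq.peq_refl)
next
  case (Cons x w)
  have "peq R ([x] @ (w @ word_inv w) @ [letter_inv x]) ([x] @ [] @ [letter_inv x])"
    by (rule peq_ctx[OF Cons])
  also have "peq R ([x] @ [] @ [letter_inv x]) []" using peq.peq_cancel[of R "[]" x "[]"] by simp
  finally show ?case by simp
qed

lemma cancel_word': "peq R (word_inv w @ w) []"
  using cancel_word[of R "word_inv w"] by simp

lemma peq_inv: "peq R u v \<Longrightarrow> peq R (word_inv u) (word_inv v)"
proof (induction rule: peq.induct)
  case (peq_refl w) show ?case by (rule peq.peq_refl)
next
  case (peq_sym u v) then show ?case by (metis peq.peq_sym)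
next
  case (peq_trans u v w) then show ?case by (metis peq.peq_trans)
next
  case (peq_cancel u x v) show ?case using peq.peq_cancel[of R "word_inv v" x "word_inv u"] by simp
next
  case (peq_rel r s u v)
  have "peq R (word_inv r) (word_inv r @ s @ word_inv s)"
    using peq_ctx[OF peq.peq_sym[OF cancel_word[of R s]], of "word_inv r" "[]"] by simp
  also have "peq R (word_inv r @ s @ word_inv s) (word_inv r @ r @ word_inv s)"
    by (rule peq.peq_sym, rule peq.peq_rel[OF peq_rel])
  also have "peq R (word_inv r @ r @ word_inv s) (word_inv s)"
    using peq_ctx[OF cancel_word'[of R r], of "[]" "word_inv s"] by simp
  finally have "peq R (word_inv r) (word_inv s)" .
  from peq_ctx[OF this, of "word_inv v" "word_inv u"] show ?case by simp
qed


abbreviation pl :: "'a \<Rightarrow> 'a \<times> bool" where "pl c \<equiv> (c, False)"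
abbreviation mi :: "'a \<Rightarrow> 'a \<times> bool" where "mi c \<equiv> (c, True)"

definition comm :: "('a word \<times> 'a word) set \<Rightarrow> 'a word \<Rightarrow> 'a word \<Rightarrow> bool" where
  "comm R u w \<longleftrightarrow> peq R (u @ w) (w @ u)"

lemma comm_sym: "comm R u w \<Longrightarrow> comm R w u"
  unfolding comm_def by (metis peq.peq_sym)

lemma comm_inv_left: assumes "comm R u w" shows "comm R (word_inv u) w"
proof -
  have "peq R (word_inv u @ w) (word_inv u @ (w @ u) @ word_inv u)"
    using peq_ctx[OF peq.peq_sym[OF cancel_word[of R u]], of "word_inv u @ w" "[]"] by simp
  also have "peq R (word_inv u @ (w @ u) @ word_inv u) (word_inv u @ (u @ w) @ word_inv u)"
    using assms unfolding comm_def by (metis peq_ctx peq.peq_sym)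
  also have "peq R (word_inv u @ (u @ w) @ word_inv u) (w @ word_inv u)"
    using peq_ctx[OF cancel_word'[of R u], of "[]" "w @ word_inv u"] by simp
  finally show ?thesis unfolding comm_def .
qed

lemma comm_app_left: assumes "comm R u w" "comm R v w" shows "comm R (u @ v) w"
proof -
  have "peq R (u @ v @ w) (u @ w @ v)"
    using assms(2) unfolding comm_def using peq_ctx[of R "v@w" "w@v" u "[]"] by simp
  also have "peq R (u @ w @ v) (w @ u @ v)"
    using assms(1) unfolding comm_def using peq_ctx[of R "u@w" "w@u" "[]" v] by simp
  finally show ?thesis unfolding comm_def by simp
qed

lemma comm_use: "comm R u w \<Longrightarrow> x = a @ u @ w @ b \<Longrightarrow> y = a @ w @ u @ b \<Longrightarrow> peq R x y"
  unfolding comm_def by (rule peq_ctx'[where a=a and b=b]) simp_all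

lemma peq_use: "peq R u w \<Longrightarrow> x = a @ u @ b \<Longrightarrow> y = a @ w @ b \<Longrightarrow> peq R x y"
  by (rule peq_ctx')

lemma rel_peq: "(r, s) \<in> R \<Longrightarrow> peq R r s"
  using peq.peq_rel[of r s R "[]" "[]"] by simp

lemma rB_comm: "1 \<le> a \<Longrightarrow> a \<le> n - 1 \<Longrightarrow> 1 \<le> b \<Longrightarrow> b \<le> n - 1 \<Longrightarrow> (a > b + 1 \<or> b > a + 1)
  \<Longrightarrow> comm (relsB n) [pl a] [pl b]"
  unfolding comm_def by (rule rel_peq) (auto simp: relsB_def gen_def)

lemma rB_braid: "2 \<le> m \<Longrightarrow> m \<le> n - 2 \<Longrightarrow>
  peq (relsB n) [pl m, pl (m+1), pl m] [pl (m+1), pl m, pl (m+1)]"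
  by (rule rel_peq) (auto simp: relsB_def gen_def)

lemma rB_B: "peq (relsB n) [pl 1, pl 2, pl 1, pl 2] [pl 2, pl 1, pl 2, pl 1]"
  by (rule rel_peq) (auto simp: relsB_def gen_def)

lemma J1: assumes "peq R [pl a, pl b, pl a] [pl b, pl a, pl b]"
  shows "peq R [pl b, pl a, mi b] [mi a, pl b, pl a]"
proof -
  have "peq R [pl b, pl a, mi b] [mi a, pl a, pl b, pl a, mi b]"
    using peq_ctx[OF peq.peq_sym[OF cancel_word'[of R "[pl a]"]], of "[]" "[pl b, pl a, mi b]"] by simp
  also have "peq R [mi a, pl a, pl b, pl a, mi b] [mi a, pl b, pl a, pl b, mi b]"
    by (rule peq_use[OF assms, where a="[mi a]" and b="[mi b]"]) simp_all
  also have "peq R [mi a, pl b, pl a, pl b, mi b] [mi a, pl b, pl a]"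
    using peq_ctx[OF cancel_word[of R "[pl b]"], of "[mi a, pl b, pl a]" "[]"] by simp
  finally show ?thesis .
qed

lemma J2: assumes "peq R [pl a, pl b, pl a] [pl b, pl a, pl b]"
  shows "peq R [pl b, mi a, mi b] [mi a, mi b, pl a]"
  using peq_inv[OF J1[OF assms]] by simp

primrec Ab :: "nat \<Rightarrow> nat word" where
  "Ab 0 = [pl 1]"
| "Ab (Suc t) = [mi (t+2)] @ Ab t @ [pl (t+2)]"

lemma G1: "t + 3 \<le> b \<Longrightarrow> b \<le> n - 1 \<Longrightarrow> comm (relsB n) (Ab t) [pl b]"
proof (induction t)
  case 0 then show ?case by (simp add: rB_comm)
next
  case (Suc t)
  have c: "comm (relsB n) [pl (t+2)] [pl b]" using Suc.prems by (intro rB_comm) auto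
  have "comm (relsB n) [mi (t+2)] [pl b]" using comm_inv_left[OF c] by simp
  then show ?case using Suc c by (simp del: append.simps add: comm_app_left)
qed


lemma brs: "2 \<le> m \<Longrightarrow> m \<le> n - 2 \<Longrightarrow>
  peq (relsB n) [pl (m+1), pl m, pl (m+1)] [pl m, pl (m+1), pl m]"
  using rB_braid by (metis peq.peq_sym)

lemma I1: "2 \<le> m \<Longrightarrow> m \<le> n - 2 \<Longrightarrow>
  peq (relsB n) [pl m, mi (m+1), mi m] [mi (m+1), mi m, pl (m+1)]"
  by (rule J2[OF brs])
lemma I2: "2 \<le> m \<Longrightarrow> m \<le> n - 2 \<Longrightarrow>
  peq (relsB n) [pl m, pl (m+1), mi m] [mi (m+1), pl m, pl (m+1)]"
  by (rule J1[OF brs])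
lemma I3: "2 \<le> m \<Longrightarrow> m \<le> n - 2 \<Longrightarrow>
  peq (relsB n) [pl (m+1), mi m, mi (m+1)] [mi m, mi (m+1), pl m]"
  by (rule J2[OF rB_braid])

lemma G2: "2 \<le> c \<Longrightarrow> c \<le> t \<Longrightarrow> t + 1 \<le> n - 1 \<Longrightarrow> comm (relsB n) (Ab t) [pl c]"
proof (induction t arbitrary: c)
  case 0 then show ?case by simp
next
  case (Suc t)
  show ?case
  proof (cases "c \<le> t")
    case True
    have c: "comm (relsB n) [pl (t+2)] [pl c]" using Suc.prems True by (intro rB_comm) auto
    have "comm (relsB n) [mi (t+2)] [pl c]" using comm_inv_left[OF c] by simp
    moreover have "comm (relsB n) (Ab t) [pl c]" using Suc True by simp
    ultimately show ?thesis using c by (simp del: append.simps add: comm_app_left)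
  next
    case False
    then have cc: "c = t + 1" using Suc.prems by simp
    then obtain t' where t: "t = Suc t'" using Suc.prems by (cases t) auto
    define A0 where "A0 = Ab t'"
    define x where "x = t' + 2"
    have y: "t' + 3 = x + 1" by (simp add: x_def)
    have xr: "2 \<le> x" "x \<le> n - 2" using Suc.prems t by (auto simp: x_def)
    have cA: "comm (relsB n) A0 [pl (x+1)]" unfolding A0_def using G1[of t' "x+1" n] xr
      by (simp add: x_def)
    have "peq (relsB n) ([pl c] @ Ab (Suc t)) ([pl x, mi (x+1), mi x] @ A0 @ [pl x, pl (x+1)])"
      by (simp add: t cc A0_def x_def peq.peq_refl)
    also have "peq (relsB n) \<dots> ([mi (x+1), mi x, pl (x+1)] @ A0 @ [pl x, pl (x+1)])"
      by (rule peq_use[OF I1[OF xr], where a="[]" and b="A0 @ [pl x, pl (x+1)]"]) simp_all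
    also have "peq (relsB n) \<dots> ([mi (x+1), mi x] @ A0 @ [pl (x+1), pl x, pl (x+1)])"
      by (rule comm_use[OF comm_sym[OF cA], where a="[mi (x+1), mi x]" and b="[pl x, pl (x+1)]"]) simp_all
    also have "peq (relsB n) \<dots> ([mi (x+1), mi x] @ A0 @ [pl x, pl (x+1), pl x])"
      by (rule peq_use[OF brs[OF xr], where a="[mi (x+1), mi x] @ A0" and b="[]"]) simp_all
    also have "([mi (x+1), mi x] @ A0 @ [pl x, pl (x+1), pl x]) = Ab (Suc t) @ [pl c]"
      by (simp add: t cc A0_def x_def)
    finally show ?thesis unfolding comm_def by (metis peq.peq_sym)
  qed
qed


lemma G3: "t + 2 \<le> n - 1 \<Longrightarrow> n \<ge> 3 \<Longrightarrow>
  peq (relsB n) (Ab t @ [pl (t+2)] @ Ab t @ [pl (t+2)]) ([pl (t+2)] @ Ab t @ [pl (t+2)] @ Ab t)"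
proof (induction t)
  case 0 then show ?case using rB_B[of n] by (simp add: numeral_2_eq_2)
next
  case (Suc t)
  define A where "A = Ab t"
  define y where "y = t + 2"
  have z: "t + 3 = y + 1" by (simp add: y_def)
  have yr: "2 \<le> y" "y \<le> n - 2" using Suc.prems by (auto simp: y_def)
  have IH: "peq (relsB n) (A @ [pl y] @ A @ [pl y]) ([pl y] @ A @ [pl y] @ A)"
    using Suc by (simp add: A_def y_def)
  have cz: "comm (relsB n) A [pl (y+1)]" unfolding A_def using G1[of t "y+1" n] yr
    by (simp add: y_def)
  have czi: "comm (relsB n) A [mi (y+1)]"
    using comm_sym[OF comm_inv_left[OF comm_sym[OF cz]]] by simp
  have "peq (relsB n) (Ab (Suc t) @ [pl (Suc t+2)] @ Ab (Suc t) @ [pl (Suc t+2)])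
     ([mi y] @ A @ [pl y, pl (y+1), mi y] @ A @ [pl y, pl (y+1)])"
    by (simp add: A_def y_def peq.peq_refl)
  also have "peq (relsB n) \<dots> ([mi y] @ A @ [mi (y+1), pl y, pl (y+1)] @ A @ [pl y, pl (y+1)])"
    by (rule peq_use[OF I2[OF yr], where a="[mi y] @ A" and b="A @ [pl y, pl (y+1)]"]) simp_all
  also have "peq (relsB n) \<dots> ([mi y, mi (y+1)] @ A @ [pl y, pl (y+1)] @ A @ [pl y, pl (y+1)])"
    by (rule comm_use[OF czi, where a="[mi y]" and b="[pl y, pl (y+1)] @ A @ [pl y, pl (y+1)]"]) simp_all
  also have "peq (relsB n) \<dots> ([mi y, mi (y+1)] @ A @ [pl y] @ A @ [pl (y+1), pl y, pl (y+1)])"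
    by (rule comm_use[OF comm_sym[OF cz], where a="[mi y, mi (y+1)] @ A @ [pl y]" and b="[pl y, pl (y+1)]"]) simp_all
  also have "peq (relsB n) \<dots> ([mi y, mi (y+1)] @ A @ [pl y] @ A @ [pl y, pl (y+1), pl y])"
    by (rule peq_use[OF brs[OF yr], where a="[mi y, mi (y+1)] @ A @ [pl y] @ A" and b="[]"]) simp_all
  also have "peq (relsB n) \<dots> ([mi y, mi (y+1)] @ [pl y] @ A @ [pl y] @ A @ [pl (y+1), pl y])"
    by (rule peq_use[OF IH, where a="[mi y, mi (y+1)]" and b="[pl (y+1), pl y]"]) simp_all
  also have "peq (relsB n) \<dots> ([pl (y+1), mi y, mi (y+1)] @ A @ [pl y] @ A @ [pl (y+1), pl y])"
    by (rule peq_use[OF peq.peq_sym[OF I3[OF yr]], where a="[]" and b="A @ [pl y] @ A @ [pl (y+1), pl y]"]) simp_all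
  also have "peq (relsB n) \<dots> ([pl (y+1), mi y] @ A @ [mi (y+1), pl y] @ A @ [pl (y+1), pl y])"
    by (rule comm_use[OF comm_sym[OF czi], where a="[pl (y+1), mi y]" and b="[pl y] @ A @ [pl (y+1), pl y]"]) simp_all
  also have "peq (relsB n) \<dots> ([pl (y+1), mi y] @ A @ [mi (y+1), pl y, pl (y+1)] @ A @ [pl y])"
    by (rule comm_use[OF cz, where a="[pl (y+1), mi y] @ A @ [mi (y+1), pl y]" and b="[pl y]"]) simp_all
  also have "peq (relsB n) \<dots> ([pl (y+1), mi y] @ A @ [pl y, pl (y+1), mi y] @ A @ [pl y])"
    by (rule peq_use[OF peq.peq_sym[OF I2[OF yr]], where a="[pl (y+1), mi y] @ A" and b="A @ [pl y]"]) simp_all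
  also have "[pl (y+1), mi y] @ A @ [pl y, pl (y+1), mi y] @ A @ [pl y]
     = [pl (Suc t+2)] @ Ab (Suc t) @ [pl (Suc t+2)] @ Ab (Suc t)"
    by (simp add: A_def y_def)
  finally show ?case .
qed


lemma pre: "peq R u v \<Longrightarrow> peq R (h @ u) (h @ v)"
  using peq_ctx[of R u v h "[]"] by simp

lemma comm_pre: "comm R u v \<Longrightarrow> peq R (h @ u @ v) (h @ v @ u)"
  unfolding comm_def by (rule pre)

fun step :: "nat \<Rightarrow> bool \<Rightarrow> nat word \<times> nat \<Rightarrow> nat word \<times> nat" where
  "step j b (h, p) =
    (if \<not> b then
       (if p = j then (h, p + 1) else if p = j + 1 then (h @ Ab (j - 1), j)
        else if j + 1 < p then (h @ [pl (j + 1)], p) else (h @ [pl j], p))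
     else
       (if p = j + 1 then (h, j) else if p = j then (h @ word_inv (Ab (j - 1)), j + 1)
        else if j + 1 < p then (h @ [mi (j + 1)], p) else (h @ [mi j], p)))"

declare step.simps[simp del]

definition sim :: "nat \<Rightarrow> nat word \<times> nat \<Rightarrow> nat word \<times> nat \<Rightarrow> bool" where
  "sim n s s' \<longleftrightarrow> snd s = snd s' \<and> peq (relsB n) (fst s) (fst s')"

lemma sim_refl: "sim n s s" by (simp add: sim_def peq.peq_refl)
lemma sim_sym: "sim n s s' \<Longrightarrow> sim n s' s" by (auto simp: sim_def intro: peq.peq_sym)
lemma sim_trans: "sim n s s' \<Longrightarrow> sim n s' s'' \<Longrightarrow> sim n s s''"
  by (auto simp: sim_def intro: peq.peq_trans)

lemma step_sim: "sim n s s' \<Longrightarrow> sim n (step j b s) (step j b s')"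
  apply (cases s; cases s')
  apply (auto simp: sim_def step.simps Let_def)
  apply (auto intro: peq_ctx[where a="[]", simplified])
  done

lemma step_cancel: "1 \<le> j \<Longrightarrow> sim n (step j (\<not> b) (step j b s)) s"
proof (cases s)
  case (Pair h p)
  have c1: "peq (relsB n) (h @ w @ word_inv w) h" for w
    using pre[OF cancel_word[of "relsB n" w], of h] by simp
  have c2: "peq (relsB n) (h @ word_inv w @ w) h" for w
    using pre[OF cancel_word'[of "relsB n" w], of h] by simp
  have c3: "peq (relsB n) (h @ [pl c, mi c]) h" for c
    using peq.peq_cancel[of "relsB n" h "pl c" "[]"] by simp
  have c4: "peq (relsB n) (h @ [mi c, pl c]) h" for c
    using peq.peq_cancel[of "relsB n" h "mi c" "[]"] by simp
  assume "1 \<le> j"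
  then show ?thesis using Pair
    by (cases b; auto simp: sim_def step.simps c1 c2 c3 c4 peq.peq_refl
          intro: c1[where w="[_]", simplified] c2[where w="[_]", simplified])
qed

lemma braid_act: assumes "1 \<le> j" "j + 2 \<le> n" "1 \<le> p" "p \<le> n" "3 \<le> n"
  shows "sim n (step j False (step (j+1) False (step j False (h,p))))
               (step (j+1) False (step j False (step (j+1) False (h,p))))"
proof -
  obtain j' where j: "j = Suc j'" using assms by (cases j) auto
  consider "p < j" | "p = j" | "p = j + 1" | "p = j + 2" | "j + 2 < p" by linarith
  then show ?thesis
  proof cases
    case 1
    have "peq (relsB n) (h @ [pl j, pl (j+1), pl j]) (h @ [pl (j+1), pl j, pl (j+1)])"
      using assms 1 by (intro pre rB_braid) auto
    then show ?thesis using 1 by (simp add: sim_def step.simps)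
  next
    case 2 then show ?thesis by (simp add: sim_def step.simps peq.peq_refl)
  next
    case 3
    have "peq (relsB n) (h @ Ab j' @ [pl (j'+2)]) (h @ [pl (j'+2), mi (j'+2)] @ Ab j' @ [pl (j'+2)])"
      using peq.peq_sym[OF peq.peq_cancel[of "relsB n" h "pl (j'+2)" "Ab j' @ [pl (j'+2)]"]] by simp
    then show ?thesis using 3 j by (simp add: sim_def step.simps)
  next
    case 4
    have g: "peq (relsB n) (Ab j' @ [pl (j'+2)] @ Ab j' @ [pl (j'+2)]) ([pl (j'+2)] @ Ab j' @ [pl (j'+2)] @ Ab j')"
      using assms j by (intro G3) auto
    have "peq (relsB n) (h @ [pl (j'+2), mi (j'+2)] @ Ab j' @ [pl (j'+2)] @ Ab j') (h @ Ab j' @ [pl (j'+2)] @ Ab j')"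
      using peq.peq_cancel[of "relsB n" h "pl (j'+2)" "Ab j' @ [pl (j'+2)] @ Ab j'"] by simp
    also have "peq (relsB n) \<dots> (h @ [mi (j'+2), pl (j'+2)] @ Ab j' @ [pl (j'+2)] @ Ab j')"
      using peq.peq_sym[OF peq.peq_cancel[of "relsB n" h "mi (j'+2)" "Ab j' @ [pl (j'+2)] @ Ab j'"]] by simp
    also have "peq (relsB n) \<dots> (h @ [mi (j'+2)] @ Ab j' @ [pl (j'+2)] @ Ab j' @ [pl (j'+2)])"
      by (rule peq_use[OF peq.peq_sym[OF g], where a="h @ [mi (j'+2)]" and b="[]"]) simp_all
    finally show ?thesis using 4 j by (simp add: sim_def step.simps)
  next
    case 5
    have "peq (relsB n) (h @ [pl (j+1), pl (j+2), pl (j+1)]) (h @ [pl (j+2), pl (j+1), pl (j+2)])"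
      using assms 5 rB_braid[of "j+1" n] by (intro pre) auto
    then show ?thesis using 5 by (simp add: sim_def step.simps)
  qed
qed

lemma comm_act: assumes "1 \<le> a" "a + 2 \<le> b" "b \<le> n - 1" "1 \<le> p" "p \<le> n"
  shows "sim n (step b False (step a False (h,p))) (step a False (step b False (h,p)))"
proof -
  consider "p < a" | "p = a" | "p = a + 1" | "a + 1 < p \<and> p < b" | "p = b" | "p = b + 1" | "b + 1 < p"
    by linarith
  then show ?thesis
  proof cases
    case 1
    have "peq (relsB n) (h @ [pl a] @ [pl b]) (h @ [pl b] @ [pl a])"
      using assms by (intro comm_pre rB_comm) auto
    then show ?thesis using 1 assms by (simp add: sim_def step.simps)
  next
    case 2 then show ?thesis using assms by (simp add: sim_def step.simps peq.peq_refl)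
  next
    case 3
    have "peq (relsB n) (h @ Ab (a-1) @ [pl b]) (h @ [pl b] @ Ab (a-1))"
      using assms by (intro comm_pre G1) auto
    then show ?thesis using 3 assms by (simp add: sim_def step.simps)
  next
    case 4
    have "peq (relsB n) (h @ [pl (a+1)] @ [pl b]) (h @ [pl b] @ [pl (a+1)])"
      using assms 4 by (intro comm_pre rB_comm) auto
    then show ?thesis using 4 assms by (simp add: sim_def step.simps)
  next
    case 5 then show ?thesis using assms by (simp add: sim_def step.simps peq.peq_refl)
  next
    case 6
    have "peq (relsB n) (h @ [pl (a+1)] @ Ab (b-1)) (h @ Ab (b-1) @ [pl (a+1)])"
      using assms by (intro comm_pre comm_sym[OF G2]) auto
    then show ?thesis using 6 assms by (simp add: sim_def step.simps)
  next
    case 7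
    have "peq (relsB n) (h @ [pl (a+1)] @ [pl (b+1)]) (h @ [pl (b+1)] @ [pl (a+1)])"
      using assms 7 by (intro comm_pre rB_comm) auto
    then show ?thesis using 7 assms by (simp add: sim_def step.simps)
  qed
qed


fun sig :: "nat \<Rightarrow> genE \<Rightarrow> nat option" where
  "sig n (T i) = Some 1"
| "sig n (S j) = (if 3 \<le> j \<and> j \<le> n then Some (j - 1) else None)"

definition actL :: "nat \<Rightarrow> genE \<times> bool \<Rightarrow> nat word \<times> nat \<Rightarrow> nat word \<times> nat" where
  "actL n x s = (case sig n (fst x) of None \<Rightarrow> s | Some j \<Rightarrow> step j (snd x) s)"

definition act :: "nat \<Rightarrow> genE word \<Rightarrow> nat word \<times> nat \<Rightarrow> nat word \<times> nat" where
  "act n w s = fold (actL n) w s"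

lemma act_Nil[simp]: "act n [] s = s" by (simp add: act_def)
lemma act_Cons[simp]: "act n (x # w) s = act n w (actL n x s)" by (simp add: act_def)
lemma act_app[simp]: "act n (u @ v) s = act n v (act n u s)" by (simp add: act_def)

definition ok :: "nat \<Rightarrow> nat word \<times> nat \<Rightarrow> bool" where
  "ok n s \<longleftrightarrow> 1 \<le> snd s \<and> snd s \<le> n"

lemma sig_range: "sig n x = Some j \<Longrightarrow> 3 \<le> n \<Longrightarrow> 1 \<le> j \<and> j + 1 \<le> n"
  by (cases x) (auto split: if_splits)

lemma step_ok: "1 \<le> j \<Longrightarrow> j + 1 \<le> n \<Longrightarrow> ok n s \<Longrightarrow> ok n (step j b s)"
  by (cases s) (auto simp: ok_def step.simps)

lemma actL_ok: "3 \<le> n \<Longrightarrow> ok n s \<Longrightarrow> ok n (actL n x s)"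
  unfolding actL_def by (auto split: option.splits dest!: sig_range intro: step_ok)

lemma act_ok: "3 \<le> n \<Longrightarrow> ok n s \<Longrightarrow> ok n (act n w s)"
proof (induction w arbitrary: s)
  case (Cons x w) then show ?case using actL_ok by (metis act_Cons)
qed simp

lemma actL_sim: "sim n s s' \<Longrightarrow> sim n (actL n x s) (actL n x s')"
  unfolding actL_def by (auto split: option.splits intro: step_sim)

lemma act_sim: "sim n s s' \<Longrightarrow> sim n (act n w s) (act n w s')"
proof (induction w arbitrary: s s')
  case (Cons x w) then show ?case using actL_sim by (metis act_Cons)
qed simp

lemma act_cancel: "3 \<le> n \<Longrightarrow> sim n (act n [x, letter_inv x] s) s"
proof -
  assume n: "3 \<le> n"
  obtain g b where x: "x = (g, b)" by (cases x)
  show ?thesis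
  proof (cases "sig n g")
    case None then show ?thesis by (simp add: x actL_def sim_refl)
  next
    case (Some j)
    then have "1 \<le> j" using sig_range[of n "g" j] n by simp
    then show ?thesis using Some step_cancel[of j n b s] by (simp add: x actL_def)
  qed
qed

lemma memE1: "3 \<le> i \<Longrightarrow> i \<le> n \<Longrightarrow> 3 \<le> j \<Longrightarrow> j \<le> n \<Longrightarrow> (i = j + 1 \<or> j = i + 1) \<Longrightarrow>
  peq (relsE e k n) [pl (S i), pl (S j), pl (S i)] [pl (S j), pl (S i), pl (S j)]"
  by (rule rel_peq) (auto simp: relsE_def gen_def)
lemma memE2: "3 \<le> i \<Longrightarrow> i \<le> n \<Longrightarrow> 3 \<le> j \<Longrightarrow> j \<le> n \<Longrightarrow> (i > j + 1 \<or> j > i + 1) \<Longrightarrow>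
  peq (relsE e k n) [pl (S i), pl (S j)] [pl (S j), pl (S i)]"
  by (rule rel_peq) (auto simp: relsE_def gen_def)
lemma memE3: "i < e \<Longrightarrow>
  peq (relsE e k n) [pl (S 3), pl (T i), pl (S 3)] [pl (T i), pl (S 3), pl (T i)]"
  by (rule rel_peq) (auto simp: relsE_def gen_def)
lemma memE4: "i < e \<Longrightarrow> 4 \<le> j \<Longrightarrow> j \<le> n \<Longrightarrow>
  peq (relsE e k n) [pl (S j), pl (T i)] [pl (T i), pl (S j)]"
  by (rule rel_peq) (auto simp: relsE_def gen_def)
lemma memE5: "i < e \<Longrightarrow> j < e \<Longrightarrow> peq (relsE e k n) (tt e k i) (tt e k j)"
  by (rule rel_peq) (auto simp: relsE_def)

lemma rel_act: assumes "(r, s) \<in> relsE e k n" "3 \<le> n" "ok n st"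
  shows "sim n (act n r st) (act n s st)"
proof -
  obtain h p where st: "st = (h, p)" by (cases st)
  have p: "1 \<le> p" "p \<le> n" using assms(3) st by (auto simp: ok_def)
  from assms(1) show ?thesis unfolding relsE_def
  proof (elim UnE CollectE exE conjE)
    fix i j assume rs: "(r, s) = (gen (S i) @ gen (S j) @ gen (S i), gen (S j) @ gen (S i) @ gen (S j))"
      and c: "3 \<le> i" "i \<le> n" "3 \<le> j" "j \<le> n" "i = j + 1 \<or> j = i + 1"
    show ?thesis
    proof (cases "j = i + 1")
      case True
      then show ?thesis using rs c braid_act[of "i - 1" n p h] p assms(2)
        by (simp add: gen_def actL_def st)
    next
      case False
      then have "i = j + 1" using c by simp
      then show ?thesis using rs c braid_act[of "j - 1" n p h] p assms(2)
        by (auto simp: gen_def actL_def st intro: sim_sym)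
    qed
  next
    fix i j assume rs: "(r, s) = (gen (S i) @ gen (S j), gen (S j) @ gen (S i))"
      and c: "3 \<le> i" "i \<le> n" "3 \<le> j" "j \<le> n" "i > j + 1 \<or> j > i + 1"
    show ?thesis
    proof (cases "j > i + 1")
      case True
      then show ?thesis using rs c comm_act[of "i - 1" "j - 1" n p h] p
        by (auto simp: gen_def actL_def st intro: sim_sym)
    next
      case False
      then have "i > j + 1" using c by simp
      then show ?thesis using rs c comm_act[of "j - 1" "i - 1" n p h] p
        by (auto simp: gen_def actL_def st intro: sim_sym)
    qed
  next
    fix i assume rs: "(r, s) = (gen (S 3) @ gen (T i) @ gen (S 3), gen (T i) @ gen (S 3) @ gen (T i))"
    show ?thesis using rs braid_act[of 1 n p h] p assms(2)
      by (auto simp: gen_def actL_def st numeral_3_eq_3 intro: sim_sym)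
  next
    fix i j assume rs: "(r, s) = (gen (S j) @ gen (T i), gen (T i) @ gen (S j))"
      and c: "4 \<le> j" "j \<le> n"
    show ?thesis using rs c comm_act[of 1 "j - 1" n p h] p
      by (auto simp: gen_def actL_def st intro: sim_sym)
  next
    fix i j assume rs: "(r, s) = (tt e k i, tt e k j)"
    show ?thesis using rs by (simp add: tt_def gen_def actL_def sim_refl)
  qed
qed


lemma main_act: "peq (relsE e k n) w w' \<Longrightarrow> 3 \<le> n \<Longrightarrow>
  \<forall>st. ok n st \<longrightarrow> sim n (act n w st) (act n w' st)"
proof (induction rule: peq.induct)
  case (peq_refl w) then show ?case by (simp add: sim_refl)
next
  case (peq_sym u v) then show ?case by (blast intro: sim_sym)
next
  case (peq_trans u v w) then show ?case by (blast intro: sim_trans)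
next
  case (peq_cancel u x v)
  show ?case
  proof (intro allI impI)
    fix st assume "ok n st"
    have "sim n (act n [x, letter_inv x] (act n u st)) (act n u st)"
      using act_cancel peq_cancel by blast
    then show "sim n (act n (u @ [x, letter_inv x] @ v) st) (act n (u @ v) st)"
      using act_sim by simp
  qed
next
  case (peq_rel r s u v)
  show ?case
  proof (intro allI impI)
    fix st assume "ok n st"
    then have "ok n (act n u st)" using act_ok peq_rel by blast
    then have "sim n (act n r (act n u st)) (act n s (act n u st))"
      using rel_act peq_rel by blast
    then show "sim n (act n (u @ r @ v) st) (act n (u @ s @ v) st)"
      using act_sim by simp
  qed
qed

lemma wsubst_Nil[simp]: "wsubst f [] = []" by (simp add: wsubst_def)
lemma wsubst_Cons[simp]: "wsubst f (x # w) =
   (if snd x then word_inv (f (fst x)) else f (fst x)) @ wsubst f w" by (simp add: wsubst_def)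
lemma wsubst_app[simp]: "wsubst f (u @ v) = wsubst f u @ wsubst f v" by (simp add: wsubst_def)

lemma act_phi: "words_over (gensB n) u \<Longrightarrow> 3 \<le> n \<Longrightarrow>
  act n (wsubst (phi e k) u) (h, 1) = (h @ u, 1)"
proof (induction u arbitrary: h)
  case Nil then show ?case by simp
next
  case (Cons x u)
  obtain m b where x: "x = (m, b)" by (cases x)
  have m: "1 \<le> m" "m \<le> n - 1" using Cons.prems x by (auto simp: words_over_def gensB_def)
  have wo: "words_over (gensB n) u" using Cons.prems by (simp add: words_over_def)
  have "act n (if b then word_inv (phi e k m) else phi e k m) (h, 1) = (h @ [(m, b)], 1)"
  proof (cases "m = 1")
    case True
    then show ?thesis by (cases b) (simp_all add: phi_def tt_def gen_def actL_def step.simps)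
  next
    case False
    then show ?thesis using m Cons.prems
      by (cases b) (auto simp: phi_def gen_def actL_def step.simps)
  qed
  then show ?case using Cons.IH[OF wo Cons.prems(2)] by (cases b) (simp_all add: x)
qed

theorem inj_part: assumes "3 \<le> n" "words_over (gensB n) u" "words_over (gensB n) v"
  "peq (relsE e k n) (wsubst (phi e k) u) (wsubst (phi e k) v)"
  shows "peq (relsB n) u v"
proof -
  have "sim n (act n (wsubst (phi e k) u) ([], 1)) (act n (wsubst (phi e k) v) ([], 1))"
    using main_act[OF assms(4) assms(1)] assms(1) by (simp add: ok_def)
  then show ?thesis using act_phi assms by (simp add: sim_def)
qed


lemma TS_comm: "i < e \<Longrightarrow> 4 \<le> j \<Longrightarrow> j \<le> n \<Longrightarrow> i' < e \<Longrightarrow>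
  peq (relsE e k n) [pl (T i), pl (T i'), pl (S j)] [pl (S j), pl (T i), pl (T i')]"
proof -
  assume a: "i < e" "4 \<le> j" "j \<le> n" "i' < e"
  have "peq (relsE e k n) [pl (T i), pl (T i'), pl (S j)] [pl (T i), pl (S j), pl (T i')]"
    by (rule peq_use[OF peq.peq_sym[OF memE4[of i' e j n k]], where a="[pl (T i)]" and b="[]"]) (use a in simp_all)
  also have "peq (relsE e k n) \<dots> [pl (S j), pl (T i), pl (T i')]"
    by (rule peq_use[OF peq.peq_sym[OF memE4[of i e j n k]], where a="[]" and b="[pl (T i')]"]) (use a in simp_all)
  finally show ?thesis .
qed

lemma relB_img: assumes "(r, s) \<in> relsB n" "3 \<le> n" "2 \<le> e"
  shows "peq (relsE e k n) (wsubst (phi e k) r) (wsubst (phi e k) s)"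
proof -
  define b0 where "b0 = (0 + e - k) mod e"
  define c0 where "c0 = (b0 + e - k) mod e"
  have bc: "b0 < e" "c0 < e" using assms by (auto simp: b0_def c0_def)
  have t0: "phi e k 1 = [pl (T 0), pl (T b0)]" by (simp add: phi_def tt_def gen_def b0_def)
  have t0': "phi e k (Suc 0) = [pl (T 0), pl (T b0)]" using t0 by simp
  have ph: "m \<noteq> 1 \<Longrightarrow> phi e k m = [pl (S (m+1))]" for m by (simp add: phi_def gen_def)
  have R2: "peq (relsE e k n) [pl (T 0), pl (T b0)] [pl (T b0), pl (T c0)]"
    using memE5[of 0 e b0 k n] bc assms by (simp add: tt_def gen_def b0_def c0_def)
  let ?a = "pl (T 0)" and ?b = "pl (T b0)" and ?c = "pl (T c0)" and ?s = "pl (S 3)"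
  have typeB: "peq (relsE e k n) [?a, ?b, ?s, ?a, ?b, ?s] [?s, ?a, ?b, ?s, ?a, ?b]"
  proof -
    have "peq (relsE e k n) [?a, ?b, ?s, ?a, ?b, ?s] [?a, ?b, ?s, ?b, ?c, ?s]"
      by (rule peq_use[OF R2, where a="[?a, ?b, ?s]" and b="[?s]"]) simp_all
    also have "peq (relsE e k n) \<dots> [?a, ?s, ?b, ?s, ?c, ?s]"
      by (rule peq_use[OF peq.peq_sym[OF memE3[OF bc(1)]], where a="[?a]" and b="[?c, ?s]"]) simp_all
    also have "peq (relsE e k n) \<dots> [?a, ?s, ?b, ?c, ?s, ?c]"
      by (rule peq_use[OF memE3[OF bc(2)], where a="[?a, ?s, ?b]" and b="[]"]) simp_all
    also have "peq (relsE e k n) \<dots> [?a, ?s, ?a, ?b, ?s, ?c]"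
      by (rule peq_use[OF peq.peq_sym[OF R2], where a="[?a, ?s]" and b="[?s, ?c]"]) simp_all
    also have "peq (relsE e k n) \<dots> [?s, ?a, ?s, ?b, ?s, ?c]"
      by (rule peq_use[OF peq.peq_sym[OF memE3], where a="[]" and b="[?b, ?s, ?c]"]) (use assms in simp_all)
    also have "peq (relsE e k n) \<dots> [?s, ?a, ?b, ?s, ?b, ?c]"
      by (rule peq_use[OF memE3[OF bc(1)], where a="[?s, ?a]" and b="[?c]"]) simp_all
    also have "peq (relsE e k n) \<dots> [?s, ?a, ?b, ?s, ?a, ?b]"
      by (rule peq_use[OF peq.peq_sym[OF R2], where a="[?s, ?a, ?b, ?s]" and b="[]"]) simp_all
    finally show ?thesis .
  qed
  from assms(1) show ?thesis unfolding relsB_def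
  proof (elim UnE CollectE exE conjE insertE)
    assume "(r, s) = (gen 1 @ gen 2 @ gen 1 @ gen 2, gen 2 @ gen 1 @ gen 2 @ gen 1)"
    moreover have "phi e k (Suc 0) = [pl (T 0), pl (T b0)]" using t0 by simp
    ultimately show ?thesis using typeB by (simp add: gen_def ph)
  next
    assume "(r, s) \<in> {}" then show ?thesis by simp
  next
    fix m assume rs: "(r, s) = (gen m @ gen (m + 1) @ gen m, gen (m + 1) @ gen m @ gen (m + 1))"
      and c: "2 \<le> m" "m \<le> n - 2"
    show ?thesis using rs c memE1[of "m+1" n "m+2" e k] by (simp add: gen_def ph)
  next
    fix a b assume rs: "(r, s) = (gen a @ gen b, gen b @ gen a)"
      and c: "1 \<le> a" "a \<le> n - 1" "1 \<le> b" "b \<le> n - 1" "b + 1 < a \<or> a + 1 < b"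
    consider "a = 1" | "b = 1" | "a \<noteq> 1 \<and> b \<noteq> 1" by blast
    then show ?thesis
    proof cases
      case 1 then show ?thesis using rs c TS_comm[of 0 e "b+1" n b0 k] bc
        by (simp add: gen_def t0' ph)
    next
      case 2 then show ?thesis using rs c peq.peq_sym[OF TS_comm[of 0 e "a+1" n b0 k]] bc
        by (simp add: gen_def t0' ph)
    next
      case 3 then show ?thesis using rs c memE2[of "a+1" n "b+1" e k]
        by (simp add: gen_def ph)
    qed
  qed
qed

lemma hom_part: "peq (relsB n) u v \<Longrightarrow> 3 \<le> n \<Longrightarrow> 2 \<le> e \<Longrightarrow>
  peq (relsE e k n) (wsubst (phi e k) u) (wsubst (phi e k) v)"
proof (induction rule: peq.induct)
  case (peq_refl w) then show ?case by (simp add: peq.peq_refl)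
next
  case (peq_sym u v) then show ?case by (metis peq.peq_sym)
next
  case (peq_trans u v w) then show ?case by (metis peq.peq_trans)
next
  case (peq_cancel u x v)
  obtain m b where x: "x = (m, b)" by (cases x)
  have "peq (relsE e k n) (wsubst (phi e k) [x, letter_inv x]) []"
    by (cases b) (simp_all add: x cancel_word cancel_word')
  from peq_ctx[OF this, where a="wsubst (phi e k) u" and b="wsubst (phi e k) v"]
  show ?case unfolding wsubst_app by (simp del: wsubst_Cons)
next
  case (peq_rel r s u v)
  have "peq (relsE e k n) (wsubst (phi e k) r) (wsubst (phi e k) s)"
    using relB_img peq_rel by blast
  from peq_ctx[OF this, where a="wsubst (phi e k) u" and b="wsubst (phi e k) v"]
  show ?case by simp
qed

theorem mainTheorem13:
  fixes n e k :: nat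
  assumes "n \<ge> 3" and "e \<ge> 2" and "1 \<le> k" and "k \<le> e - 1"
  shows "(\<forall>i<e. \<forall>j<e. peq (relsE e k n) (tt e k i) (tt e k j))
    \<and> (\<forall>u v. words_over (gensB n) u \<longrightarrow> words_over (gensB n) v \<longrightarrow>
          peq (relsB n) u v \<longrightarrow> peq (relsE e k n) (wsubst (phi e k) u) (wsubst (phi e k) v))
    \<and> (\<forall>u v. words_over (gensB n) u \<longrightarrow> words_over (gensB n) v \<longrightarrow>
          peq (relsE e k n) (wsubst (phi e k) u) (wsubst (phi e k) v) \<longrightarrow> peq (relsB n) u v)"
proof (intro conjI allI impI)
  fix i j assume "i < e" "j < e"
  then show "peq (relsE e k n) (tt e k i) (tt e k j)" by (rule memE5)
next
  fix u v :: "nat word"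
  assume "peq (relsB n) u v"
  then show "peq (relsE e k n) (wsubst (phi e k) u) (wsubst (phi e k) v)"
    using hom_part assms(1,2) by blast
next
  fix u v :: "nat word"
  assume "words_over (gensB n) u" "words_over (gensB n) v"
    "peq (relsE e k n) (wsubst (phi e k) u) (wsubst (phi e k) v)"
  then show "peq (relsB n) u v" using inj_part assms(1) by blast
qed

end
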